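(* Let $U>0$. For an integer $L>\frac{8}{U}$ and real $\Lambda$, let $q_\ell(\Lambda)$, $\ell=1,\dots,L$, denote the unique solution $k\in[(\ell-1)\frac{2\pi}{L},\ell\frac{2\pi}{L}]$ of $\sin k - \Lambda = \frac{U}{4}\cot\left(\frac{kL}{2}\right)$, and for integers $\ell,m$ with $\frac{L}{2}\le m-\ell\le \frac{3L}{2}-1$ let $\xi_{\ell,m}(\Lambda)$ denote the unique positive solution $\xi$ of $$\cos\left(m\frac{\pi}{L} - \frac{q_\ell(\Lambda)}{2}\right)\sinh(\xi) = -\frac{U}{4}\,\frac{\sinh(\xi L)}{\cosh(\xi L) - (-1)^m\cos\left(q_\ell(\Lambda)L/2\right)}.$$ For every integer $L>\frac{8}{U}$ choose integers $\ell_L\in\{1,\dots,L\}$ and $m_L$ with $\frac{L}{2}\le m_L-\ell_L\le\frac{3L}{2}-1$, such that $\lim_{L\to\infty}(m_L-\ell_L)\frac{\pi}{L} = q$ with $\frac{\pi}{2}<q<\frac{3\pi}{2}$. Then $$\lim_{L\to\infty}\xi_{\ell_L,m_L}(\Lambda) = -\operatorname{arsinh}\left(\frac{U}{4\cos(q)}\right)$$ uniformly in $\Lambda\in\mathbb{R}$.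
   Context: This concerns $N=3$ electrons and one down spin on a lattice of length $L$: solutions of the Lieb-Wu equations $e^{ik_jL} = \frac{\Lambda-\sin k_j - iU/4}{\Lambda - \sin k_j + iU/4}$ ($j=1,2,3$), $\prod_j \frac{\Lambda-\sin k_j - iU/4}{\Lambda - \sin k_j + iU/4}=1$, consisting of a $k$-$\Lambda$ two-string $k_{1,2} = q\mp i\xi$ ($\xi>0$) and a real $k_3 = q_\ell(\Lambda)$, where the total momentum condition gives $q = m\frac{\pi}{L} - \frac{q_\ell(\Lambda)}{2}$ and $\xi=\xi_{\ell,m}(\Lambda)$. Under $U>0$, $L>8/U$ and $\frac{L}{2}\le m-\ell\le\frac{3L}{2}-1$ the displayed equation has a unique positive solution for every real $\Lambda$. The result says that these strings are driven to the ideal string positions $\sinh\xi = -U/(4\cos q)$ as $L\to\infty$. *)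

theory Defs
  imports "HOL-Analysis.Analysis"
begin

text \<open>The endpoints are excluded since cot is
  singular there (in Isabelle cot at a pole would evaluate to 0).\<close>
definition qell :: "real \<Rightarrow> nat \<Rightarrow> int \<Rightarrow> real \<Rightarrow> real" where
  "qell U L l \<Lambda> = (THE k. (real_of_int l - 1) * (2 * pi / real L) < k
      \<and> k < real_of_int l * (2 * pi / real L)
      \<and> sin k - \<Lambda> = U / 4 * cot (k * real L / 2))"

definition xi :: "real \<Rightarrow> nat \<Rightarrow> int \<Rightarrow> int \<Rightarrow> real \<Rightarrow> real" where
  "xi U L l m \<Lambda> = (THE \<xi>. \<xi> > 0 \<and>
      cos (real_of_int m * pi / real L - qell U L l \<Lambda> / 2) * sinh \<xi>
        = - (U / 4) * sinh (\<xi> * real L)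
          / (cosh (\<xi> * real L) - (-1::real) powi m * cos (qell U L l \<Lambda> * real L / 2)))"

end

theory Submission
  imports Defs
begin



lemma le_sinh: "0 \<le> (x::real) \<Longrightarrow> x \<le> sinh x"
  using real_le_x_sinh[of x] by (simp add: sinh_field_def exp_minus)

lemma sinh_lt_x_cosh: assumes "0 < (x::real)" shows "sinh x < x * cosh x"
proof -
  have "(\<lambda>t. t * cosh t - sinh t) 0 < (\<lambda>t. t * cosh t - sinh t) x"
  proof (rule DERIV_pos_imp_increasing_open[OF assms])
    fix t :: real assume "0 < t" "t < x"
    show "\<exists>y. ((\<lambda>t. t * cosh t - sinh t) has_real_derivative y) (at t) \<and> 0 < y"
      by (rule exI[of _ "t * sinh t"]) (auto intro!: derivative_eq_intros simp: \<open>0<t\<close>)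
  qed (auto intro!: continuous_intros)
  then show ?thesis by simp
qed

lemma sinh_mult_nat: "0 \<le> (x::real) \<Longrightarrow> real n * sinh x \<le> sinh (real n * x)"
proof (induction n)
  case 0 then show ?case by simp
next
  case (Suc n)
  have "sinh (real (Suc n) * x) = sinh (real n * x) * cosh x + cosh (real n * x) * sinh x"
    by (simp add: distrib_right sinh_add)
  moreover have "sinh (real n * x) * cosh x \<ge> sinh (real n * x)"
  proof -
    have "0 \<le> real n * x" using Suc.prems by simp
    then have "0 \<le> sinh (real n * x)" by simp
    then show ?thesis using cosh_real_ge_1[of x] by (intro mult_le_cancel_left1[THEN iffD2]) auto
  qed
  moreover have "cosh (real n * x) * sinh x \<ge> sinh x"
    using Suc.prems cosh_real_ge_1[of "real n * x"] by (intro mult_le_cancel_right1[THEN iffD2]) auto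
  ultimately show ?case using Suc by (simp add: distrib_right)
qed

lemma cos_lip: "\<bar>cos (x::real) - cos y\<bar> \<le> \<bar>x - y\<bar>"
proof -
  have "\<bar>cos x - cos y\<bar> = 2 * \<bar>sin ((x + y) / 2)\<bar> * \<bar>sin ((y - x) / 2)\<bar>"
    by (simp add: cos_diff_cos abs_mult)
  also have "\<dots> \<le> 2 * 1 * \<bar>(y - x) / 2\<bar>"
    by (intro mult_mono abs_sin_x_le_abs_x) auto
  finally show ?thesis by simp
qed

definition phi :: "real \<Rightarrow> real \<Rightarrow> real \<Rightarrow> real" where
  "phi L d t = sinh t * (cosh (t * L) - d) / sinh (t * L)"

lemma phi_num_pos:
  fixes L d t :: real
  assumes L: "0 < L" and d: "-1 \<le> d" "d \<le> 1" and t: "0 < t"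
  shows "0 < cosh t * sinh (t*L) * (cosh (t*L) - d) + L * sinh t * (d * cosh (t*L) - 1)"
proof -
  define x where "x = t * L"
  have x: "0 < x" unfolding x_def by (rule mult_pos_pos[OF t L])
  have cx: "cosh x > 1" using x cosh_real_ge_1[of x] cosh_real_one_iff[of x] by linarith
  have sx: "sinh x > 0" using x by simp
  have ct: "cosh t > 0" by simp
  show ?thesis
  proof (cases "d * cosh x \<ge> 1")
    case True
    have "0 < cosh t * sinh x * (cosh x - d)" using cx d sx ct by simp
    moreover have "0 \<le> L * sinh t * (d * cosh x - 1)" using True L t by simp
    ultimately show ?thesis unfolding x_def by linarith
  next
    case False
    have "sinh t < t * cosh t" by (rule sinh_lt_x_cosh[OF t])
    then have "L * sinh t * (d * cosh x - 1) > L * (t * cosh t) * (d * cosh x - 1)"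
      using False L by (intro mult_strict_right_mono_neg mult_strict_left_mono) auto
    also have "L * (t * cosh t) * (d * cosh x - 1) = x * cosh t * (d * cosh x - 1)"
      by (simp add: x_def)
    finally have A: "L * sinh t * (d * cosh x - 1) > x * cosh t * (d * cosh x - 1)" .
    have B: "x * cosh x - sinh x \<ge> 0" using sinh_lt_x_cosh[OF x] by simp
    have "d * (x * cosh x - sinh x) \<ge> -1 * (x * cosh x - sinh x)"
      using B d by (intro mult_right_mono) auto
    moreover have "(sinh x - x) * (cosh x + 1) \<ge> 0"
      using le_sinh[of x] x cx by simp
    ultimately have "sinh x * (cosh x - d) + x * (d * cosh x - 1) \<ge> 0"
      by (simp add: algebra_simps)
    then have "cosh t * (sinh x * (cosh x - d) + x * (d * cosh x - 1)) \<ge> 0" using ct by simp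
    then show ?thesis using A unfolding x_def[symmetric] by (simp add: algebra_simps)
  qed
qed

lemma phi_aux: "(c::real) * c = u * u + 1 \<Longrightarrow>
   ((a * 1 * (c-d) + (u * (1 * L + 0 * t) - 0) * st) * u - st * (c-d) * (c * (1 * L + 0 * t))) = a * u * (c-d) + L * st * (d * c - 1)"
proof -
  assume h: "c * c = u * u + 1"
  have "((a * 1 * (c-d) + (u * (1 * L + 0 * t) - 0) * st) * u - st * (c-d) * (c * (1 * L + 0 * t))) - (a * u * (c-d) + L * st * (d * c - 1))
        = L * st * (u * u + 1 - c * c)" by (simp add: algebra_simps)
  then show ?thesis using h by simp
qed

lemma phi_deriv:
  assumes L: "0 < L" and t: "0 < t"
  shows "(phi L d has_real_derivative
     (cosh t * sinh (t*L) * (cosh (t*L) - d) + L * sinh t * (d * cosh (t*L) - 1)) / (sinh (t*L))^2) (at t)"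
proof -
  have sx: "sinh (t*L) \<noteq> 0" using L t by simp
  show ?thesis unfolding phi_def[abs_def]
    apply (rule derivative_eq_intros refl)+
    using sx apply simp
    apply (simp only: power2_eq_square)
    apply (subst phi_aux)
     apply (simp add: cosh_square_eq[unfolded power2_eq_square])
    apply simp
    done
qed

lemma sin_ne_0_between:
  fixes x :: real and l :: int
  assumes "(real_of_int l - 1) * pi < x" "x < real_of_int l * pi"
  shows "sin x \<noteq> 0"
proof
  assume "sin x = 0"
  then obtain i :: int where i: "x = of_int i * pi" using sin_zero_iff_int2 by blast
  with assms have "real_of_int l - 1 < of_int i" "of_int i < real_of_int l" by auto
  then have "l - 1 < i" "i < l" by linarith+
  then show False by linarith
qed

lemma qell_exists_unique:
  fixes U \<Lambda> :: real and L :: nat and l :: int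
  assumes U: "U > 0" and L: "real L > 8 / U"
  shows "\<exists>!k. (real_of_int l - 1) * (2 * pi / real L) < k
      \<and> k < real_of_int l * (2 * pi / real L)
      \<and> sin k - \<Lambda> = U / 4 * cot (k * real L / 2)"
proof -
  have Lpos: "real L > 0" using L U by (smt (verit) divide_pos_pos)
  have UL: "U * real L > 8" using L U by (simp add: field_simps)
  define a where "a = (real_of_int l - 1) * (2 * pi / real L)"
  define b where "b = real_of_int l * (2 * pi / real L)"
  define F where "F k = U / 4 * cot (k * real L / 2) - sin k + \<Lambda>" for k
  have inside: "(real_of_int l - 1) * pi < k * real L / 2 \<and> k * real L / 2 < real_of_int l * pi"
    if "a < k" "k < b" for k
  proof -
    have "a * real L / 2 < k * real L / 2" "k * real L / 2 < b * real L / 2"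
      using that Lpos by (auto intro!: divide_strict_right_mono mult_strict_right_mono)
    moreover have "a * real L / 2 = (real_of_int l - 1) * pi" "b * real L / 2 = real_of_int l * pi"
      using Lpos by (simp_all add: a_def b_def field_simps)
    ultimately show ?thesis by simp
  qed
  have sne: "sin (k * real L / 2) \<noteq> 0" if "a < k" "k < b" for k
    using inside[OF that] sin_ne_0_between by blast
  have deriv: "(F has_real_derivative (U / 4 * (- inverse ((sin (k * real L / 2))\<^sup>2) * (real L / 2)) - cos k)) (at k)"
    if "a < k" "k < b" for k
    unfolding F_def[abs_def]
    by (rule derivative_eq_intros DERIV_cot[THEN DERIV_chain2] refl sne[OF that] | simp)+
  have dneg: "U / 4 * (- inverse ((sin (k * real L / 2))\<^sup>2) * (real L / 2)) - cos k < 0"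
    if "a < k" "k < b" for k
  proof -
    have s2: "0 < (sin (k * real L / 2))\<^sup>2" "(sin (k * real L / 2))\<^sup>2 \<le> 1"
      using sne[OF that] by (auto simp: abs_square_le_1)
    have "inverse ((sin (k * real L / 2))\<^sup>2) \<ge> 1" using s2 by (simp add: one_le_inverse)
    then have "U * real L / 8 * inverse ((sin (k * real L / 2))\<^sup>2) \<ge> U * real L / 8 * 1"
      using U Lpos by (intro mult_left_mono) auto
    moreover have "- cos k \<le> 1" using cos_ge_minus_one[of k] by linarith
    moreover have "U / 4 * (- inverse ((sin (k * real L / 2))\<^sup>2) * (real L / 2))
       = - (U * real L / 8 * inverse ((sin (k * real L / 2))\<^sup>2))" by (simp add: algebra_simps)
    ultimately show ?thesis using UL by linarith
  qed
  have dec: "F x > F y" if "a < x" "x < y" "y < b" for x y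
    using that by (intro DERIV_neg_imp_decreasing[OF \<open>x < y\<close>]) (meson deriv dneg le_less_trans less_le_trans)
  have eqF: "(sin k - \<Lambda> = U / 4 * cot (k * real L / 2)) \<longleftrightarrow> F k = 0" for k
    by (auto simp: F_def)
  define M where "M = 4 * (1 + \<bar>\<Lambda>\<bar>) / U"
  have M: "M \<ge> 0" using U by (simp add: M_def)
  define t where "t = arctan (1 / (M + 1))"
  have t: "0 < t" "t < pi / 2" using M arctan_ubound[of "1/(M+1)"] by (auto simp: t_def)
  have tant: "tan t = 1 / (M + 1)" unfolding t_def by (rule tan_arctan)
  define k1 where "k1 = a + 2 * t / real L"
  define k2 where "k2 = b - 2 * t / real L"
  have ab: "b - a = 2 * pi / real L" by (simp add: a_def b_def diff_divide_distrib algebra_simps)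
  have k12: "a < k1" "k1 < k2" "k2 < b"
  proof -
    show "a < k1" using t Lpos by (simp add: k1_def)
    show "k2 < b" using t Lpos by (simp add: k2_def)
    have "4 * t / real L < 2 * pi / real L" using t Lpos by (simp add: divide_strict_right_mono)
    then show "k1 < k2" using ab by (simp add: k1_def k2_def field_simps)
  qed
  have c1: "cot (k1 * real L / 2) = M + 1"
  proof -
    have "k1 * real L / 2 = t + of_int (l - 1) * pi"
      using Lpos by (simp add: k1_def a_def field_simps)
    then have "cot (k1 * real L / 2) = inverse (tan (t + of_int (l - 1) * pi))"
      by (simp only: cot_altdef)
    also have "\<dots> = inverse (tan t)" by (simp only: tan_periodic_int)
    finally show ?thesis using M by (simp add: tant)
  qed
  have c2: "cot (k2 * real L / 2) = - (M + 1)"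
  proof -
    have "k2 * real L / 2 = - t + of_int l * pi"
      using Lpos by (simp add: k2_def b_def field_simps)
    then have "cot (k2 * real L / 2) = inverse (tan (- t + of_int l * pi))"
      by (simp only: cot_altdef)
    also have "\<dots> = inverse (tan (- t))" by (simp only: tan_periodic_int)
    finally show ?thesis using M by (simp add: tant tan_minus)
  qed
  have F1: "F k1 > 0"
  proof -
    have "U / 4 * (M + 1) = 1 + \<bar>\<Lambda>\<bar> + U / 4" using U by (simp add: M_def field_simps)
    then have "F k1 = 1 + \<bar>\<Lambda>\<bar> + U / 4 - sin k1 + \<Lambda>" by (simp add: F_def c1)
    moreover have "sin k1 \<le> 1" by simp
    ultimately show ?thesis using U by linarith
  qed
  have F2: "F k2 < 0"
  proof -
    have "U / 4 * (M + 1) = 1 + \<bar>\<Lambda>\<bar> + U / 4" using U by (simp add: M_def field_simps)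
    then have "F k2 = - (1 + \<bar>\<Lambda>\<bar> + U / 4) - sin k2 + \<Lambda>" by (simp add: F_def c2 del: minus_add_distrib)
    moreover have "- sin k2 \<le> 1" using sin_ge_minus_one[of k2] by linarith
    ultimately show ?thesis using U by linarith
  qed
  have "\<exists>x. k1 \<le> x \<and> x \<le> k2 \<and> F x = 0"
  proof (rule IVT2)
    show "\<forall>x. k1 \<le> x \<and> x \<le> k2 \<longrightarrow> isCont F x"
      using deriv k12 by (meson DERIV_isCont le_less_trans less_le_trans)
  qed (use F1 F2 k12 in auto)
  then obtain x where "k1 \<le> x" "x \<le> k2" "F x = 0" by blast
  then have x: "a < x" "x < b" "F x = 0" using k12 by linarith+
  show ?thesis unfolding a_def[symmetric] b_def[symmetric] eqF
  proof (rule ex1I[of _ x])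
    show "a < x \<and> x < b \<and> F x = 0" using x by simp
    fix y assume y: "a < y \<and> y < b \<and> F y = 0"
    show "y = x"
    proof (rule ccontr)
      assume "y \<noteq> x"
      then consider "y < x" | "x < y" by linarith
      then show False
      proof cases
        case 1 then show ?thesis using dec[of y x] x y by simp
      next
        case 2 then show ?thesis using dec[of x y] x y by simp
      qed
    qed
  qed
qed

lemma qell_bounds:
  fixes U \<Lambda> :: real and L :: nat and l :: int
  assumes U: "U > 0" and L: "real L > 8 / U"
  shows "(real_of_int l - 1) * (2 * pi / real L) < qell U L l \<Lambda>"
    and "qell U L l \<Lambda> < real_of_int l * (2 * pi / real L)"
  using theI'[OF qell_exists_unique[OF U L, of l \<Lambda>]] unfolding qell_def by auto

lemma phi_le1:
  fixes L d t :: real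
  assumes L: "0 < L" and t: "0 < t" and d: "-1 \<le> d"
  shows "phi L d t \<le> sinh t * (1 + 2 / (t * L))"
proof -
  define x where "x = t * L"
  have x: "0 < x" unfolding x_def by (rule mult_pos_pos[OF t L])
  have sx: "x \<le> sinh x" using le_sinh[of x] x by simp
  have sp: "0 < sinh x" using x by simp
  have "cosh x - sinh x \<le> 1" using x by (simp add: cosh_minus_sinh)
  then have "(cosh x - d) / sinh x \<le> (sinh x + 2) / sinh x"
    using sp d by (intro divide_right_mono) auto
  also have "\<dots> = 1 + 2 / sinh x" using sp by (simp add: field_simps)
  also have "\<dots> \<le> 1 + 2 / x" using sx x by (simp add: frac_le)
  finally have "(cosh x - d) / sinh x \<le> 1 + 2 / x" .
  then have "sinh t * ((cosh x - d) / sinh x) \<le> sinh t * (1 + 2 / x)"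
    using t by (intro mult_left_mono) auto
  then show ?thesis by (simp add: phi_def x_def)
qed

lemma phi_ge1:
  fixes L d t :: real
  assumes L: "0 < L" and t: "0 < t" and d: "d \<le> 1"
  shows "sinh t * (1 - 1 / (t * L)) \<le> phi L d t"
proof -
  define x where "x = t * L"
  have x: "0 < x" unfolding x_def by (rule mult_pos_pos[OF t L])
  have sx: "x \<le> sinh x" using le_sinh[of x] x by simp
  have sp: "0 < sinh x" using x by simp
  have "1 - 1 / x \<le> 1 - 1 / sinh x" using sx x by (simp add: frac_le)
  also have "\<dots> = (sinh x - 1) / sinh x" using sp by (simp add: field_simps)
  also have "\<dots> \<le> (cosh x - d) / sinh x"
    using sp d sinh_le_cosh_real[of x] by (intro divide_right_mono) auto
  finally have "1 - 1 / x \<le> (cosh x - d) / sinh x" .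
  then have "sinh t * (1 - 1 / x) \<le> sinh t * ((cosh x - d) / sinh x)"
    using t by (intro mult_left_mono) auto
  then show ?thesis by (simp add: phi_def x_def)
qed

lemma phi_le_nat:
  fixes d t :: real and n :: nat
  assumes n: "0 < n" and t: "0 < t" and d: "-1 \<le> d" "d \<le> 1"
  shows "phi (real n) d t \<le> (cosh (t * real n) + 1) / real n"
proof -
  have sp: "0 < sinh (t * real n)" using t n by simp
  have "real n * sinh t \<le> sinh (t * real n)" using sinh_mult_nat[of t n] t by (simp add: mult.commute)
  then have A: "sinh t / sinh (t * real n) \<le> 1 / real n" using sp n by (simp add: field_simps)
  have "phi (real n) d t = (sinh t / sinh (t * real n)) * (cosh (t * real n) - d)"
    by (simp add: phi_def)
  also have "\<dots> \<le> (1 / real n) * (cosh (t * real n) + 1)"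
    using A d t sp cosh_real_ge_1[of "t * real n"] by (intro mult_mono) auto
  finally show ?thesis by simp
qed

lemma phi_strict_mono:
  fixes L d a b :: real
  assumes L: "0 < L" and d: "-1 \<le> d" "d \<le> 1" and a: "0 < a" and ab: "a < b"
  shows "phi L d a < phi L d b"
proof (rule DERIV_pos_imp_increasing[OF ab])
  fix x assume x: "a \<le> x" "x \<le> b"
  then have xp: "0 < x" using a by simp
  have "0 < (sinh (x * L))\<^sup>2" using xp L by simp
  from divide_pos_pos[OF phi_num_pos[OF L d xp] this]
  show "\<exists>y. (phi L d has_real_derivative y) (at x) \<and> 0 < y"
    using phi_deriv[OF L xp, of d] by blast
qed

lemma phi_cont:
  fixes L d x :: real
  assumes L: "0 < L" and x: "0 < x"
  shows "isCont (phi L d) x"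
  using phi_deriv[OF L x] DERIV_isCont by blast



lemma xi_spec:
  fixes U \<Lambda> :: real and L :: nat and l m :: int
  assumes U: "U > 0" and L: "real L > 8 / U"
    and lo: "real L / 2 \<le> real_of_int (m - l)" and hi: "real_of_int (m - l) \<le> 3 * real L / 2 - 1"
  defines "c \<equiv> cos (real_of_int m * pi / real L - qell U L l \<Lambda> / 2)"
    and "d \<equiv> (-1::real) powi m * cos (qell U L l \<Lambda> * real L / 2)"
  shows "c < 0" "\<bar>c - cos (real_of_int (m - l) * pi / real L)\<bar> \<le> pi / real L"
    "-1 \<le> d" "d \<le> 1" "0 < xi U L l m \<Lambda>" "phi (real L) d (xi U L l m \<Lambda>) = - U / (4 * c)"
proof -
  have Lpos: "real L > 0" using L U by (smt (verit) divide_pos_pos)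
  have n: "0 < L" using Lpos by simp
  have UL: "U * real L > 8" using L U by (simp add: field_simps)
  define q where "q = qell U L l \<Lambda>"
  define \<theta> where "\<theta> = real_of_int m * pi / real L - q / 2"
  have q1: "(real_of_int l - 1) * (2 * pi / real L) < q" and q2: "q < real_of_int l * (2 * pi / real L)"
    using qell_bounds[OF U L, of l \<Lambda>] by (simp_all add: q_def)
  have th1: "real_of_int (m - l) * pi / real L < \<theta>"
  proof -
    have "q / 2 < real_of_int l * pi / real L" using q2 by (simp add: field_simps)
    then show ?thesis by (simp add: \<theta>_def diff_divide_distrib left_diff_distrib)
  qed
  have th2: "\<theta> < real_of_int (m - l) * pi / real L + pi / real L"
  proof -
    have e: "(real_of_int l - 1) * (2 * pi / real L) = 2 * ((real_of_int l - 1) * pi / real L)" by simp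
    have "(real_of_int l - 1) * pi / real L < q / 2" using q1 unfolding e by linarith
    then have "real_of_int m * pi / real L - q / 2 < real_of_int m * pi / real L - (real_of_int l - 1) * pi / real L"
      by (rule diff_strict_left_mono)
    also have "real_of_int m * pi / real L - (real_of_int l - 1) * pi / real L
       = real_of_int (m - l) * pi / real L + pi / real L" using Lpos by (simp add: field_simps)
    finally show ?thesis unfolding \<theta>_def .
  qed
  have a1: "pi / 2 \<le> real_of_int (m - l) * pi / real L"
  proof -
    have "(real L / 2) * pi \<le> real_of_int (m - l) * pi" using lo by (intro mult_right_mono) auto
    then have "(real L / 2) * pi / real L \<le> real_of_int (m - l) * pi / real L"
      using Lpos by (intro divide_right_mono) auto
    then show ?thesis using Lpos by simp
  qed
  have a2: "real_of_int (m - l) * pi / real L + pi / real L \<le> 3 * pi / 2"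
  proof -
    have "(real_of_int (m - l) + 1) * pi \<le> (3 * real L / 2) * pi" using hi by (intro mult_right_mono) auto
    then show ?thesis using Lpos by (simp add: field_simps)
  qed
  show cneg: "c < 0"
  proof -
    have "pi / 2 < \<theta>" "\<theta> < 3 * pi / 2" using th1 th2 a1 a2 by linarith+
    then have "cos (\<theta> - pi) > 0" by (intro cos_gt_zero_pi) auto
    moreover have "cos \<theta> = - cos (\<theta> - pi)" using cos_periodic_pi[of "\<theta> - pi"] by simp
    ultimately show ?thesis by (simp add: c_def \<theta>_def q_def)
  qed
  show "\<bar>c - cos (real_of_int (m - l) * pi / real L)\<bar> \<le> pi / real L"
    using cos_lip[of \<theta> "real_of_int (m - l) * pi / real L"] th1 th2
    by (simp add: c_def \<theta>_def q_def)
  have dabs: "\<bar>d\<bar> \<le> 1" by (simp add: d_def abs_mult)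
  then show dl: "-1 \<le> d" and du: "d \<le> 1" by auto
  define K where "K = - U / (4 * c)"
  have cge: "-1 \<le> c" by (simp add: c_def)
  have K: "U / 4 \<le> K"
  proof -
    have "U / (4 * (- c)) \<ge> U / (4 * 1)" using cneg cge U by (intro divide_left_mono) auto
    then show ?thesis by (simp add: K_def)
  qed
  have Kpos: "K > 0" using K U by linarith
  define P where "P \<xi> = (\<xi> > 0 \<and>
      cos (real_of_int m * pi / real L - qell U L l \<Lambda> / 2) * sinh \<xi>
        = - (U / 4) * sinh (\<xi> * real L)
          / (cosh (\<xi> * real L) - (-1::real) powi m * cos (qell U L l \<Lambda> * real L / 2)))" for \<xi>
  have Piff: "P \<xi> \<longleftrightarrow> \<xi> > 0 \<and> phi (real L) d \<xi> = K" for \<xi>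
  proof (cases "\<xi> > 0")
    case True
    have x: "\<xi> * real L > 0" using True Lpos by simp
    have s: "sinh (\<xi> * real L) > 0" using x by simp
    have ch: "cosh (\<xi> * real L) > 1" using x cosh_real_ge_1[of "\<xi> * real L"] cosh_real_one_iff[of "\<xi> * real L"] by linarith
    have den: "cosh (\<xi> * real L) - d > 0" using ch du by linarith
    have "P \<xi> \<longleftrightarrow> c * sinh \<xi> = - (U / 4) * sinh (\<xi> * real L) / (cosh (\<xi> * real L) - d)"
      using True by (simp add: P_def c_def d_def)
    also have "\<dots> \<longleftrightarrow> phi (real L) d \<xi> = K"
    proof -
      have sne: "sinh (\<xi> * real L) \<noteq> 0" using s by linarith
      have dne: "cosh (\<xi> * real L) - d \<noteq> 0" using den by simp
      have cne: "c \<noteq> 0" using cneg by simp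
      show ?thesis unfolding phi_def K_def using sne dne cne
        by (simp add: field_simps)
    qed
    finally show ?thesis using True by simp
  qed (simp add: P_def)
  have mono: "phi (real L) d a < phi (real L) d b" if "0 < a" "a < b" for a b
    using phi_strict_mono[OF Lpos dl du that] .
  have ex: "\<exists>\<xi>. \<xi> > 0 \<and> phi (real L) d \<xi> = K"
  proof -
    define y where "y = ln (U * real L / 4 - 1)"
    have y: "0 < y" using UL by (simp add: y_def)
    have ey: "exp y = U * real L / 4 - 1" using UL by (simp add: y_def)
    have "1 < exp y" by (rule exp_gt_one[OF y])
    then have "1 < exp y * exp y" using less_1_mult by blast
    then have "cosh y < exp y" using y by (simp add: cosh_def field_simps exp_minus)
    define x0 where "x0 = y / real L"
    have x0: "0 < x0" using y Lpos by (simp add: x0_def)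
    have x0L: "x0 * real L = y" using Lpos by (simp add: x0_def)
    have "phi (real L) d x0 \<le> (cosh y + 1) / real L" using phi_le_nat[OF n x0 dl du] x0L by simp
    also have "\<dots> < (U * real L / 4) / real L"
      using \<open>cosh y < exp y\<close> ey Lpos by (intro divide_strict_right_mono) auto
    also have "\<dots> = U / 4" using Lpos by simp
    finally have P0: "phi (real L) d x0 < K" using K by simp
    define x1 where "x1 = arsinh (2 * K) + 2"
    have "arsinh (2 * K) > 0" using Kpos arsinh_real_strict_mono[of 0 "2*K"] by simp
    then have x1: "x1 > 2" by (simp add: x1_def)
    have "real L \<ge> 1" using n by simp
    then have "x1 * real L \<ge> 2 * 1" using x1 by (intro mult_mono) auto
    then have h: "1 - 1 / (x1 * real L) \<ge> 1 / 2" by (simp add: field_simps)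
    have "arsinh (2 * K) < x1" by (simp add: x1_def)
    then have "sinh (arsinh (2 * K)) < sinh x1" by (simp only: sinh_real_less_iff)
    then have sx1: "sinh x1 > 2 * K" by (simp only: sinh_arsinh_real)
    have "K < sinh x1 * (1 / 2)" using sx1 by simp
    also have "\<dots> \<le> sinh x1 * (1 - 1 / (x1 * real L))" using h x1 by (intro mult_left_mono) auto
    also have "\<dots> \<le> phi (real L) d x1" using phi_ge1[OF Lpos _ du] x1 by simp
    finally have P1: "K < phi (real L) d x1" .
    have "x0 < x1"
    proof (rule ccontr)
      assume "\<not> x0 < x1"
      then have "x1 \<le> x0" by simp
      then have "phi (real L) d x1 \<le> phi (real L) d x0"
        using mono[of x1 x0] x1 by (cases "x1 = x0") auto
      then show False using P0 P1 by simp
    qed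
    have "\<exists>x. x0 \<le> x \<and> x \<le> x1 \<and> phi (real L) d x = K"
      by (rule IVT) (use P0 P1 \<open>x0 < x1\<close> x0 phi_cont[OF Lpos] in auto)
    then obtain x where "x0 \<le> x" "phi (real L) d x = K" by blast
    moreover have "0 < x" using x0 \<open>x0 \<le> x\<close> by linarith
    ultimately show ?thesis by blast
  qed
  have "\<exists>!\<xi>. P \<xi>"
  proof -
    obtain \<xi> where "\<xi> > 0" "phi (real L) d \<xi> = K" using ex by blast
    then show ?thesis unfolding Piff
    proof (intro ex1I[of _ \<xi>])
      fix y assume y: "0 < y \<and> phi (real L) d y = K"
      show "y = \<xi>"
      proof (rule ccontr)
        assume "y \<noteq> \<xi>"
        then consider "y < \<xi>" | "\<xi> < y" by linarith
        then show False using mono[of y \<xi>] mono[of \<xi> y] y \<open>\<xi> > 0\<close> \<open>phi (real L) d \<xi> = K\<close> by cases auto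
      qed
    qed auto
  qed
  from theI'[OF this] have "P (xi U L l m \<Lambda>)" unfolding xi_def P_def[abs_def] .
  then show "0 < xi U L l m \<Lambda>" "phi (real L) d (xi U L l m \<Lambda>) = - U / (4 * c)"
    unfolding Piff K_def by auto
qed



lemma ev_real_gt: "\<forall>\<^sub>F L in sequentially. B < real L"
proof -
  obtain N :: nat where "B < real N" using reals_Archimedean2 by blast
  have "\<forall>\<^sub>F L in sequentially. N \<le> L" by (rule eventually_ge_at_top)
  then show ?thesis by (rule eventually_mono) (meson \<open>B < real N\<close> less_le_trans of_nat_le_iff)
qed

theorem mainTheorem6:
  fixes U q :: real and ell m :: "nat \<Rightarrow> int"
  assumes "U > 0"
    and "\<And>L. real L > 8 / U \<Longrightarrow> 1 \<le> ell L \<and> ell L \<le> int L"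
    and "\<And>L. real L > 8 / U \<Longrightarrow> real L / 2 \<le> real_of_int (m L - ell L)
                  \<and> real_of_int (m L - ell L) \<le> 3 * real L / 2 - 1"
    and "(\<lambda>L. real_of_int (m L - ell L) * pi / real L) \<longlonglongrightarrow> q"
    and "pi / 2 < q" and "q < 3 * pi / 2"
  shows "uniform_limit UNIV (\<lambda>L \<Lambda>. xi U L (ell L) (m L) \<Lambda>)
           (\<lambda>\<Lambda>. - arsinh (U / (4 * cos q))) sequentially"
proof -
  note U = assms(1)
  define C where "C = - cos q"
  have C: "C > 0"
  proof -
    have "cos (q - pi) > 0" using assms(5,6) by (intro cos_gt_zero_pi) auto
    moreover have "cos q = - cos (q - pi)" using cos_periodic_pi[of "q - pi"] by simp
    ultimately show ?thesis unfolding C_def by linarith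
  qed
  define Ks where "Ks = U / (4 * C)"
  have Ks: "Ks > 0" using U C by (simp add: Ks_def)
  define s where "s = arsinh Ks"
  have starget: "- arsinh (U / (4 * cos q)) = s"
  proof -
    have "U / (4 * cos q) = - Ks" by (simp add: Ks_def C_def)
    then show ?thesis by (simp add: s_def)
  qed
  have s: "s > 0" using Ks arsinh_real_strict_mono[of 0 Ks] by (simp add: s_def)
  have sinh_s: "sinh s = Ks" by (simp add: s_def)
  show ?thesis unfolding starget uniform_limit_iff
  proof (intro allI impI)
    fix e :: real assume e: "e > 0"
    define e1 where "e1 = min (e / 2) (s / 2)"
    define lo where "lo = s - e1"
    define hi where "hi = s + e / 2"
    have e1: "0 < e1" "e1 \<le> e / 2" "e1 \<le> s / 2" using e s by (auto simp: e1_def)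
    have lo: "0 < lo" "lo < s" using e1 by (auto simp: lo_def)
    have hi: "s < hi" "0 < hi" using e s by (auto simp: hi_def)
    define \<delta>1 where "\<delta>1 = (Ks - sinh lo) / 2"
    define \<delta>2 where "\<delta>2 = (sinh hi - Ks) / 2"
    have "sinh lo < sinh s" using lo by simp
    then have d1: "\<delta>1 > 0" using sinh_s by (simp add: \<delta>1_def)
    have "sinh s < sinh hi" using hi by simp
    then have d2: "\<delta>2 > 0" using sinh_s by (simp add: \<delta>2_def)
    have "sinh lo + \<delta>1 = Ks - \<delta>1" "sinh hi - \<delta>2 = Ks + \<delta>2" unfolding \<delta>1_def \<delta>2_def by (simp_all add: field_simps)
    define \<delta> where "\<delta> = min \<delta>1 \<delta>2"
    have d: "\<delta> > 0" "\<delta> \<le> \<delta>1" "\<delta> \<le> \<delta>2" using d1 d2 by (auto simp: \<delta>_def)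
    define \<eta> where "\<eta> = min (C / 2) (\<delta> * C\<^sup>2 / U)"
    have "\<delta> * C\<^sup>2 / U > 0" using C d U by simp
    then have eta: "\<eta> > 0" "\<eta> \<le> C / 2" "\<eta> \<le> \<delta> * C\<^sup>2 / U" using C unfolding \<eta>_def by linarith+
    have ev5: "\<forall>\<^sub>F L in sequentially. dist (real_of_int (m L - ell L) * pi / real L) q < \<eta> / 2"
      using tendstoD[OF assms(4), of "\<eta> / 2"] eta by simp
    show "\<forall>\<^sub>F L in sequentially. \<forall>\<Lambda>\<in>UNIV. dist (xi U L (ell L) (m L) \<Lambda>) s < e"
      using ev_real_gt[of "8 / U"] ev_real_gt[of "2 * sinh lo / (lo * \<delta>1)"]
        ev_real_gt[of "sinh hi / (hi * \<delta>2)"] ev_real_gt[of "2 * pi / \<eta>"] ev5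
    proof eventually_elim
      case (elim L)
      then have L: "8 / U < real L" and L2: "2 * sinh lo / (lo * \<delta>1) < real L"
        and L3: "sinh hi / (hi * \<delta>2) < real L" and L4: "2 * pi / \<eta> < real L"
        and L5: "dist (real_of_int (m L - ell L) * pi / real L) q < \<eta> / 2" by auto
      have Lpos: "real L > 0" using L U by (smt (verit) divide_pos_pos)
      show ?case
      proof
        fix \<Lambda> :: real
        define a where "a = real_of_int (m L - ell L) * pi / real L"
        define c where "c = cos (real_of_int (m L) * pi / real L - qell U L (ell L) \<Lambda> / 2)"
        define d where "d = (-1::real) powi (m L) * cos (qell U L (ell L) \<Lambda> * real L / 2)"
        define \<xi> where "\<xi> = xi U L (ell L) (m L) \<Lambda>"
        note sp = xi_spec[OF U L conjunct1[OF assms(3)[OF L]] conjunct2[OF assms(3)[OF L]], of \<Lambda>,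
            folded a_def c_def d_def \<xi>_def]
        have cneg: "c < 0" and ca: "\<bar>c - cos a\<bar> \<le> pi / real L" and dl: "-1 \<le> d" and du: "d \<le> 1"
          and xpos: "0 < \<xi>" and xeq: "phi (real L) d \<xi> = - U / (4 * c)"
          using sp by auto
        have piL: "pi / real L < \<eta> / 2" using L4 eta Lpos by (simp add: field_simps)
        have aq: "\<bar>a - q\<bar> < \<eta> / 2" using L5 by (simp add: a_def dist_real_def)
        have "\<bar>c - cos q\<bar> \<le> \<bar>c - cos a\<bar> + \<bar>cos a - cos q\<bar>" by linarith
        also have "\<dots> \<le> pi / real L + \<bar>a - q\<bar>" using ca cos_lip[of a q] by linarith
        finally have "\<bar>c - cos q\<bar> < \<eta>" using piL aq by linarith
        then have cq: "\<bar>(- c) - C\<bar> < \<eta>" unfolding C_def by linarith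
        define c' where "c' = - c"
        have c': "c' > C / 2" using cq eta by (simp add: c'_def)
        have c'pos: "c' > 0" using c' C by linarith
        have KL: "\<bar>U / (4 * c') - Ks\<bar> < \<delta>"
        proof -
          have "U / (4 * c') - Ks = U * (C - c') / (4 * c' * C)"
            using c'pos C by (simp add: Ks_def field_simps)
          then have "\<bar>U / (4 * c') - Ks\<bar> = U * \<bar>C - c'\<bar> / (4 * c' * C)"
            using c'pos C U by (simp add: abs_mult abs_divide)
          also have "\<dots> \<le> U * \<eta> / (4 * (C / 2) * C)"
          proof (rule frac_le)
            show "0 \<le> U * \<eta>" using U eta by simp
            show "U * \<bar>C - c'\<bar> \<le> U * \<eta>" using cq U by (simp add: c'_def)
            show "0 < 4 * (C / 2) * C" using C by simp
            show "4 * (C / 2) * C \<le> 4 * c' * C" using c' C by simp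
          qed
          also have "\<dots> = U * \<eta> / (2 * C\<^sup>2)" by (simp add: power2_eq_square)
          also have "\<dots> \<le> (\<delta> * C\<^sup>2) / (2 * C\<^sup>2)"
          proof -
            have "U * \<eta> \<le> U * (\<delta> * C\<^sup>2 / U)" using eta U by (intro mult_left_mono) auto
            then have "U * \<eta> \<le> \<delta> * C\<^sup>2" using U by simp
            then show ?thesis using C by (intro divide_right_mono) auto
          qed
          also have "\<dots> = \<delta> / 2" using C by simp
          finally show ?thesis using d by linarith
        qed
        have xeq': "phi (real L) d \<xi> = U / (4 * c')" using xeq by (simp add: c'_def)
        have low: "lo < \<xi>"
        proof -
          have "2 * sinh lo / (lo * real L) < \<delta>1"
            using L2 lo d1 Lpos by (simp add: field_simps)
          then have "sinh lo * (1 + 2 / (lo * real L)) < sinh lo + \<delta>1"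
            by (simp add: algebra_simps)
          then have "phi (real L) d lo < Ks - \<delta>1"
            using phi_le1[OF Lpos lo(1) dl] \<open>sinh lo + \<delta>1 = Ks - \<delta>1\<close> by linarith
          also have "\<dots> < phi (real L) d \<xi>" using KL d xeq' by linarith
          finally have A: "phi (real L) d lo < phi (real L) d \<xi>" .
          show ?thesis
          proof (rule ccontr)
            assume "\<not> lo < \<xi>"
            then have "\<xi> \<le> lo" by simp
            then have "phi (real L) d \<xi> \<le> phi (real L) d lo"
              using phi_strict_mono[OF Lpos dl du xpos, of lo] by (cases "\<xi> = lo") auto
            then show False using A by simp
          qed
        qed
        have upp: "\<xi> < hi"
        proof -
          have "sinh hi / (hi * real L) < \<delta>2"
            using L3 hi d2 Lpos by (simp add: field_simps)
          then have "sinh hi - \<delta>2 < sinh hi * (1 - 1 / (hi * real L))"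
            by (simp add: algebra_simps)
          then have "Ks + \<delta>2 < phi (real L) d hi"
            using phi_ge1[OF Lpos hi(2) du] \<open>sinh hi - \<delta>2 = Ks + \<delta>2\<close> by linarith
          moreover have "phi (real L) d \<xi> < Ks + \<delta>2" using KL d xeq' by linarith
          ultimately have A: "phi (real L) d \<xi> < phi (real L) d hi" by linarith
          show ?thesis
          proof (rule ccontr)
            assume "\<not> \<xi> < hi"
            then have "hi \<le> \<xi>" by simp
            then have "phi (real L) d hi \<le> phi (real L) d \<xi>"
              using phi_strict_mono[OF Lpos dl du hi(2), of \<xi>] by (cases "\<xi> = hi") auto
            then show False using A by simp
          qed
        qed
        show "dist (xi U L (ell L) (m L) \<Lambda>) s < e"
          using low upp e1 unfolding \<xi>_def[symmetric] dist_real_def lo_def hi_def by linarith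
      qed
    qed
  qed
qed

end
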